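(* Let $n\ge 2$ and let $A\in\mathrm{GL}(n,2)$ be arbitrary, with columns $\mathbf{a}_1,\dots,\mathbf{a}_n\in\mathbb{F}_2^n$. Then there exist two probability distributions $p,q\in\Delta(\mathbb{F}_2^n)$ such that $\widehat p(\mathbf{a}_i)=\widehat q(\mathbf{a}_i)$ for all $i\in\{1,\dots,n\}$, but $p(\mathbf{0})\neq q(\mathbf{0})$.
   Context: $\mathbb{F}_2$ is the field with two elements; $\mathrm{GL}(n,2)$ is the group of invertible $n\times n$ matrices over $\mathbb{F}_2$. $\Delta(\mathbb{F}_2^n)$ denotes the set of probability distributions on $\mathbb{F}_2^n$. For $\mathbf{u},\mathbf{s}\in\mathbb{F}_2^n$, $\mathbf{u}\cdot\mathbf{s}=\sum_j u_js_j \pmod 2$. For $p\in\Delta(\mathbb{F}_2^n)$ the Walsh transform is $\widehat p(\mathbf{u})=\sum_{\mathbf{s}\in\mathbb{F}_2^n}(-1)^{\mathbf{u}\cdot\mathbf{s}}p(\mathbf{s})$. (Physical interpretation: $p$ is the syndrome distribution of a state relative to an $n$-qubit stabilizer state, $p(\mathbf{0})$ is the fidelity, and $\widehat p(\mathbf{a}_i)$ are the expectations of the generators in the gauge $A$.) *)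

theory Defs
  imports "HOL-Analysis.Analysis" "HOL-Library.Z2"
begin

instance bit :: finite
proof
  have "(UNIV :: bit set) = {0, 1}"
    by (auto simp: bit_not_zero_iff)
  then show "finite (UNIV :: bit set)" by (metis finite.emptyI finite_insert)
qed

text \<open>Vectors in F_2^n are elements of bit^'n, with the finite index type 'n of
  cardinality n; n x n matrices over F_2 are elements of bit^'n^'n.\<close>

definition dot2 :: "bit ^ 'n \<Rightarrow> bit ^ 'n \<Rightarrow> bit" where
  "dot2 u s = (\<Sum>j\<in>UNIV. u $ j * s $ j)"

definition is_distribution :: "(bit ^ 'n \<Rightarrow> real) \<Rightarrow> bool" where
  "is_distribution p \<longleftrightarrow> (\<forall>s. 0 \<le> p s) \<and> (\<Sum>s\<in>UNIV. p s) = 1"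

definition walsh :: "(bit ^ 'n \<Rightarrow> real) \<Rightarrow> bit ^ 'n \<Rightarrow> real" where
  "walsh p u = (\<Sum>s\<in>UNIV. (if dot2 u s = 0 then 1 else -1) * p s)"

definition col2 :: "bit ^ 'n ^ 'n \<Rightarrow> 'n \<Rightarrow> bit ^ 'n" where
  "col2 A i = (\<chi> j. A $ j $ i)"

end

theory Submission
  imports Defs
begin

definition pm2 :: "bit ^ 'n \<Rightarrow> bit ^ 'n \<Rightarrow> bit ^ 'n \<Rightarrow> real" where
  "pm2 a b s = (if s = a then 1/2 else 0) + (if s = b then 1/2 else 0)"

definition sg :: "bit \<Rightarrow> real" where "sg x = (if x = 0 then 1 else -1)"

lemma pm2_dist: "a \<noteq> b \<Longrightarrow> is_distribution (pm2 a b)"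
  unfolding is_distribution_def pm2_def
  by (simp add: sum.distrib)

lemma walsh_pm2: "walsh (pm2 a b) u = sg (dot2 u a) / 2 + sg (dot2 u b) / 2"
proof -
  have "\<And>s. (if dot2 u s = 0 then 1 else -1) * pm2 a b s =
     (if s = a then sg (dot2 u a) / 2 else 0) + (if s = b then sg (dot2 u b) / 2 else 0)"
    by (simp add: pm2_def sg_def)
  then show ?thesis unfolding walsh_def by (simp add: sum.distrib)
qed

lemma dot2_add: "dot2 u (x + y) = dot2 u x + dot2 u y"
  unfolding dot2_def by (simp only: vector_add_component distrib_left sum.distrib)

lemma dot2_zero: "dot2 u 0 = 0"
  unfolding dot2_def by simp

lemma dot2_col: "dot2 (col2 A i) s = (transpose A *v s) $ i"
  unfolding dot2_def col2_def transpose_def matrix_vector_mult_def by simp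

lemma bit_self: "(x::bit) + x = 0"
  by (cases x) auto

theorem proposition1:
  fixes A :: "bit ^ 'n ^ 'n"
  assumes "CARD('n) \<ge> 2"
    and "invertible A"
  shows "\<exists>p q :: bit ^ 'n \<Rightarrow> real.
           is_distribution p \<and> is_distribution q \<and>
           (\<forall>i. walsh p (col2 A i) = walsh q (col2 A i)) \<and>
           p 0 \<noteq> q 0"
proof -
  obtain B where AB: "A ** B = mat 1" "B ** A = mat 1"
    using assms(2) unfolding invertible_def by blast
  obtain k1 k2 :: 'n where k: "k1 \<noteq> k2"
  proof -
    have "\<not> card (UNIV :: 'n set) \<le> Suc 0" using assms(1) by simp
    then have "\<not> (\<forall>x\<in>(UNIV :: 'n set). \<forall>y\<in>UNIV. x = y)"
      using card_le_Suc0_iff_eq[of "UNIV :: 'n set"] by simp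
    then show ?thesis using that by blast
  qed
  define s where "s k = transpose B *v axis k (1::bit)" for k
  have Ts: "transpose A *v s k = axis k 1" for k
  proof -
    have "transpose A *v s k = (transpose A ** transpose B) *v axis k 1"
      unfolding s_def by (simp only: matrix_vector_mul_assoc)
    also have "transpose A ** transpose B = mat 1"
      by (simp only: matrix_transpose_mul[symmetric] AB(2) transpose_mat)
    finally show ?thesis by simp
  qed
  have d: "dot2 (col2 A i) (s k) = (if i = k then 1 else 0)" for i k
    using Ts[of k] by (simp add: dot2_col axis_def)
  have ne: "s k1 \<noteq> s k2" using d[of k1 k1] d[of k1 k2] k by auto
  have n1: "s k1 \<noteq> 0" using d[of k1 k1] by (auto simp: dot2_zero)
  have n2: "s k2 \<noteq> 0" using d[of k2 k2] by (auto simp: dot2_zero)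
  have n12: "0 \<noteq> s k1 + s k2"
  proof
    assume "0 = s k1 + s k2"
    then have "dot2 (col2 A k1) 0 = dot2 (col2 A k1) (s k1 + s k2)" by simp
    then show False using d[of k1 k1] d[of k1 k2] k by (simp add: dot2_add dot2_zero)
  qed
  show ?thesis
  proof (intro exI conjI allI)
    show "is_distribution (pm2 0 (s k1 + s k2))" by (rule pm2_dist[OF n12])
    show "is_distribution (pm2 (s k1) (s k2))" by (rule pm2_dist[OF ne])
    fix i
    show "walsh (pm2 0 (s k1 + s k2)) (col2 A i) = walsh (pm2 (s k1) (s k2)) (col2 A i)"
      unfolding walsh_pm2 using k by (simp add: dot2_add dot2_zero d sg_def)
    show "pm2 0 (s k1 + s k2) 0 \<noteq> pm2 (s k1) (s k2) 0"
      using n1 n2 n12 by (simp add: pm2_def)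
  qed
qed

end
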